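(* Let $\mathcal{H}$ be a Hilbert space of finite dimension $N$, and let $\rho,\sigma$ be density operators on $\mathcal{H}$ with the same spectrum, where $\rho$ is not the maximally mixed state $\mathbb{1}/N$. Let $T>0$, let $t\mapsto H_t$ ($t\in[0,T]$) be a (time-dependent) Hamiltonian generating the unitary evolution $U_t$, and set $\rho_t=U_t\rho U_t^\dagger$, with $\rho_0=\rho$ and $\rho_T=\sigma$. Define $$\Theta(\rho,\sigma)=\arccos\left(\frac{\operatorname{tr}[\rho\sigma]-1/N}{\operatorname{tr}[\rho^2]-1/N}\right),\qquad Q_\Theta=\frac{1}{T}\int_0^T dt\,\sqrt{\frac{2\,\operatorname{tr}[\rho_t^2H_t^2-(\rho_tH_t)^2]}{\operatorname{tr}[\rho_t^2-\mathbb{1}/N^2]}}.$$ Then the evolution time satisfies $T\geq T_\Theta(\rho,\sigma):=\Theta(\rho,\sigma)/Q_\Theta$; i.e., the minimal time required to evolve $\rho$ to $\sigma$ by a unitary generated by $H_t$ is bounded from below by $T_\Theta(\rho,\sigma)$.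
   Context: Units with $\hbar=1$. $\Theta(\rho,\sigma)$ equals the angle $\arccos(\hat{\bm r}\cdot\hat{\bm s})$ between the generalized Bloch vectors $\bm r,\bm s$ of $\rho,\sigma$ (defined by $\rho=\frac1N(\mathbb{1}+\sqrt{N(N-1)/2}\,\bm r\cdot\bm A)$ for a basis $\bm A=(A_1,\dots,A_{N^2-1})$ of the Lie algebra of $SU(N)$ with $\operatorname{tr}[A_iA_j]=2\delta_{ij}$), normalized to unit length; states with equal spectra have Bloch vectors of equal length. The unitary $U_t$ solves $i\,\partial_t U_t=H_tU_t$, $U_0=\mathbb{1}$. *)

theory Defs
  imports "HOL-Analysis.Analysis" "Jordan_Normal_Form.Char_Poly"
begin

definition mtrace :: "complex mat \<Rightarrow> complex" where
  "mtrace A = (\<Sum>i<dim_row A. A $$ (i,i))"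

definition dagger :: "complex mat \<Rightarrow> complex mat" where
  "dagger A = mat (dim_col A) (dim_row A) (\<lambda>(i,j). cnj (A $$ (j,i)))"

definition hermitian :: "nat \<Rightarrow> complex mat \<Rightarrow> bool" where
  "hermitian N A \<longleftrightarrow> A \<in> carrier_mat N N \<and> dagger A = A"

definition psd :: "nat \<Rightarrow> complex mat \<Rightarrow> bool" where
  "psd N A \<longleftrightarrow> A \<in> carrier_mat N N \<and>
     (\<forall>x :: nat \<Rightarrow> complex.
        let q = (\<Sum>i<N. \<Sum>j<N. cnj (x i) * A $$ (i,j) * x j) in q \<in> \<real> \<and> 0 \<le> Re q)"

definition density_op :: "nat \<Rightarrow> complex mat \<Rightarrow> bool" where
  "density_op N \<rho> \<longleftrightarrow> hermitian N \<rho> \<and> psd N \<rho> \<and> mtrace \<rho> = 1"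

text \<open>Same spectrum (eigenvalues with multiplicities) = same characteristic polynomial.\<close>
definition same_spectrum :: "complex mat \<Rightarrow> complex mat \<Rightarrow> bool" where
  "same_spectrum A B \<longleftrightarrow> char_poly A = char_poly B"

definition Theta :: "nat \<Rightarrow> complex mat \<Rightarrow> complex mat \<Rightarrow> real" where
  "Theta N \<rho> \<sigma> = arccos ((Re (mtrace (\<rho> * \<sigma>)) - 1 / real N) /
                              (Re (mtrace (\<rho> * \<rho>)) - 1 / real N))"

definition generates :: "nat \<Rightarrow> real \<Rightarrow> (real \<Rightarrow> complex mat) \<Rightarrow> (real \<Rightarrow> complex mat) \<Rightarrow> bool" where
  "generates N T H U \<longleftrightarrow> U 0 = 1\<^sub>m N \<and>
     (\<forall>t\<in>{0..T}. U t \<in> carrier_mat N N \<and>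
        (\<forall>i<N. \<forall>j<N. ((\<lambda>s. U s $$ (i,j)) has_vector_derivative
                        (- \<i> * ((H t * U t) $$ (i,j)))) (at t within {0..T})))"

definition QTheta :: "nat \<Rightarrow> real \<Rightarrow> (real \<Rightarrow> complex mat) \<Rightarrow> (real \<Rightarrow> complex mat) \<Rightarrow> real" where
  "QTheta N T H \<rho>t = (1 / T) * integral {0..T} (\<lambda>t.
      sqrt (2 * Re (mtrace (\<rho>t t * \<rho>t t * H t * H t - (\<rho>t t * H t) * (\<rho>t t * H t)))
            / Re (mtrace (\<rho>t t * \<rho>t t - (1 / (of_nat N)^2) \<cdot>\<^sub>m 1\<^sub>m N))))"

end

theory Submission
  imports Defs
begin


lemma mult_entry:
  assumes "A \<in> carrier_mat n n" "B \<in> carrier_mat n n" "i < n" "j < n"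
  shows "(A * B) $$ (i,j) = (\<Sum>k<n. A $$ (i,k) * B $$ (k,j))"
  using assms by (simp add: scalar_prod_def atLeast0LessThan)

lemma mtrace_carrier: "A \<in> carrier_mat n n \<Longrightarrow> mtrace A = (\<Sum>i<n. A $$ (i,i))"
  by (simp add: mtrace_def)

lemma mtrace_comm:
  assumes "A \<in> carrier_mat n n" "B \<in> carrier_mat n n"
  shows "mtrace (A * B) = mtrace (B * A)"
proof -
  have "mtrace (A * B) = (\<Sum>i<n. \<Sum>k<n. A $$ (i,k) * B $$ (k,i))"
    using assms by (auto simp: mtrace_def scalar_prod_def atLeast0LessThan intro!: sum.cong)
  also have "\<dots> = (\<Sum>k<n. \<Sum>i<n. B $$ (k,i) * A $$ (i,k))"
    by (subst sum.swap) (simp add: mult.commute)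
  also have "\<dots> = mtrace (B * A)"
    using assms by (auto simp: mtrace_def scalar_prod_def atLeast0LessThan intro!: sum.cong)
  finally show ?thesis .
qed

lemma mtrace_add: "A \<in> carrier_mat n n \<Longrightarrow> B \<in> carrier_mat n n \<Longrightarrow> mtrace (A + B) = mtrace A + mtrace B"
  by (auto simp: mtrace_def sum.distrib)

lemma mtrace_minus: "A \<in> carrier_mat n n \<Longrightarrow> B \<in> carrier_mat n n \<Longrightarrow> mtrace (A - B) = mtrace A - mtrace B"
  by (auto simp: mtrace_def sum_subtractf)

lemma mtrace_smult: "A \<in> carrier_mat n n \<Longrightarrow> mtrace (c \<cdot>\<^sub>m A) = c * mtrace A"
  by (auto simp: mtrace_def sum_distrib_left)

lemma mtrace_one: "mtrace (1\<^sub>m n) = of_nat n"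
  by (simp add: mtrace_def)

lemma dagger_carrier[simp]: "A \<in> carrier_mat n m \<Longrightarrow> dagger A \<in> carrier_mat m n"
  by (simp add: dagger_def)

lemma dagger_dims[simp]: "dim_row (dagger A) = dim_col A" "dim_col (dagger A) = dim_row A"
  by (simp_all add: dagger_def)

lemma dagger_index[simp]: "i < dim_col A \<Longrightarrow> j < dim_row A \<Longrightarrow> dagger A $$ (i,j) = cnj (A $$ (j,i))"
  by (simp add: dagger_def)

lemma dagger_mult:
  assumes "A \<in> carrier_mat n m" "B \<in> carrier_mat m k"
  shows "dagger (A * B) = dagger B * dagger A"
  using assms by (intro eq_matI) (auto simp: scalar_prod_def mult.commute)

lemma dagger_smult: "dagger (c \<cdot>\<^sub>m A) = cnj c \<cdot>\<^sub>m dagger A"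
  by (intro eq_matI) auto

lemma dagger_one[simp]: "dagger (1\<^sub>m n) = 1\<^sub>m n"
  by (intro eq_matI) auto

lemma dagger_add: "A \<in> carrier_mat n m \<Longrightarrow> B \<in> carrier_mat n m \<Longrightarrow> dagger (A + B) = dagger A + dagger B"
  by (intro eq_matI) auto

lemma dagger_minus: "A \<in> carrier_mat n m \<Longrightarrow> B \<in> carrier_mat n m \<Longrightarrow> dagger (A - B) = dagger A - dagger B"
  by (intro eq_matI) auto

lemma dagger_dagger[simp]: "dagger (dagger A) = A"
  by (intro eq_matI) auto

lemma trace_self_dagger:
  assumes "A \<in> carrier_mat n n"
  shows "mtrace (A * dagger A) = of_real (\<Sum>i<n. \<Sum>k<n. (cmod (A $$ (i,k)))\<^sup>2)"
  using assms by (auto simp: mtrace_def scalar_prod_def atLeast0LessThan complex_mult_cnj intro!: sum.cong) (metis cmod_power2 of_real_add of_real_power)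

lemma trace_self_dagger_zero:
  assumes "A \<in> carrier_mat n n" "mtrace (A * dagger A) = 0"
  shows "A = 0\<^sub>m n n"
proof (rule eq_matI)
  have z: "(\<Sum>i<n. \<Sum>k<n. (cmod (A $$ (i,k)))\<^sup>2) = 0"
    using assms trace_self_dagger by (metis of_real_eq_0_iff)
  fix i j assume ij: "i < dim_row (0\<^sub>m n n :: complex mat)" "j < dim_col (0\<^sub>m n n :: complex mat)"
  have "\<forall>i\<in>{..<n}. (\<Sum>k<n. (cmod (A $$ (i,k)))\<^sup>2) = 0"
    using z by (subst sum_nonneg_eq_0_iff[symmetric]) (auto intro: sum_nonneg)
  then have "(\<Sum>k<n. (cmod (A $$ (i,k)))\<^sup>2) = 0" using ij by auto
  then have "(cmod (A $$ (i,j)))\<^sup>2 = 0" using ij by (subst (asm) sum_nonneg_eq_0_iff) auto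
  then show "A $$ (i,j) = 0\<^sub>m n n $$ (i,j)" using ij by simp
qed (use assms in auto)

definition fip :: "nat \<Rightarrow> complex mat \<Rightarrow> complex mat \<Rightarrow> real" where
  "fip n A B = (\<Sum>i<n. \<Sum>k<n. Re (A $$ (i,k)) * Re (B $$ (i,k)) + Im (A $$ (i,k)) * Im (B $$ (i,k)))"

lemma fip_sym: "fip n A B = fip n B A"
  by (simp add: fip_def mult.commute)

lemma fip_nonneg: "0 \<le> fip n A A"
  by (simp add: fip_def sum_nonneg)

lemma fip_minus: "A \<in> carrier_mat n n \<Longrightarrow> B \<in> carrier_mat n n \<Longrightarrow> fip n (A - B) C = fip n A C - fip n B C"
proof -
  assume c: "A \<in> carrier_mat n n" "B \<in> carrier_mat n n"
  have "fip n (A - B) C = (\<Sum>i<n. \<Sum>k<n. (Re (A $$ (i,k)) * Re (C $$ (i,k)) + Im (A $$ (i,k)) * Im (C $$ (i,k)))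
     - (Re (B $$ (i,k)) * Re (C $$ (i,k)) + Im (B $$ (i,k)) * Im (C $$ (i,k))))"
    unfolding fip_def using c by (intro sum.cong refl) (auto simp: left_diff_distrib)
  also have "\<dots> = fip n A C - fip n B C" by (simp add: fip_def sum_subtractf)
  finally show ?thesis .
qed

lemma fip_smult: "A \<in> carrier_mat n n \<Longrightarrow> fip n (of_real k \<cdot>\<^sub>m A) C = k * fip n A C"
proof -
  assume c: "A \<in> carrier_mat n n"
  have "fip n (of_real k \<cdot>\<^sub>m A) C = (\<Sum>i<n. \<Sum>k'<n. k * (Re (A $$ (i,k')) * Re (C $$ (i,k')) + Im (A $$ (i,k')) * Im (C $$ (i,k'))))"
    unfolding fip_def using c by (intro sum.cong refl) (auto simp: distrib_left)
  also have "\<dots> = k * fip n A C" by (simp add: fip_def sum_distrib_left)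
  finally show ?thesis .
qed

lemma fip_CS: "(fip n A B)\<^sup>2 \<le> fip n A A * fip n B B"
proof -
  define J where "J = ({..<n} \<times> {..<n}) \<times> {..<2::nat}"
  define \<alpha> where "\<alpha> M = (\<lambda>((i,k),j). if j = (0::nat) then Re (M $$ (i,k)) else Im (M $$ (i,k)))" for M :: "complex mat"
  have e: "fip n M M' = (\<Sum>x\<in>J. \<alpha> M x * \<alpha> M' x)" for M M'
  proof -
    have "(\<Sum>x\<in>J. \<alpha> M x * \<alpha> M' x) = (\<Sum>p\<in>{..<n} \<times> {..<n}. \<Sum>j<2. \<alpha> M (p,j) * \<alpha> M' (p,j))"
      unfolding J_def by (simp add: sum.cartesian_product')
    also have "\<dots> = (\<Sum>i<n. \<Sum>k<n. \<Sum>j<2. \<alpha> M ((i,k),j) * \<alpha> M' ((i,k),j))"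
      by (simp add: sum.cartesian_product')
    also have "\<dots> = fip n M M'"
      by (simp add: fip_def \<alpha>_def numeral_2_eq_2)
    finally show ?thesis by simp
  qed
  show ?thesis unfolding e power2_eq_square[symmetric]
    using Cauchy_Schwarz_ineq_sum[of "\<alpha> A" "\<alpha> B" J] by (simp add: power2_eq_square)
qed

lemma fip_trace:
  assumes "A \<in> carrier_mat n n" "B \<in> carrier_mat n n" "dagger B = B"
  shows "Re (mtrace (A * B)) = fip n A B"
proof -
  have b0: "B $$ (k,i) = cnj (B $$ (i,k))" if "i < n" "k < n" for i k
  proof -
    have "B $$ (k,i) = dagger B $$ (k,i)" using assms(3) by simp
    also have "\<dots> = cnj (B $$ (i,k))" using that assms(2) by simp
    finally show ?thesis .
  qed
  have b: "A $$ (i,k) * B $$ (k,i) = A $$ (i,k) * cnj (B $$ (i,k))" if "i < n" "k < n" for i k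
    using b0[OF that] by simp
  have "mtrace (A * B) = (\<Sum>i<n. \<Sum>k<n. A $$ (i,k) * B $$ (k,i))"
    using assms by (auto simp: mtrace_def scalar_prod_def atLeast0LessThan intro!: sum.cong)
  also have "\<dots> = (\<Sum>i<n. \<Sum>k<n. A $$ (i,k) * cnj (B $$ (i,k)))"
    using b by (auto intro!: sum.cong)
  finally show ?thesis by (simp add: fip_def Re_sum)
qed

lemma key_ineq:
  fixes X0 Xt D :: "complex mat" and R2 a :: real
  assumes c: "X0 \<in> carrier_mat n n" "Xt \<in> carrier_mat n n"
    and h: "fip n Xt D = 0" "fip n X0 X0 = R2" "fip n Xt Xt = R2" "fip n X0 Xt = a" "R2 > 0"
  shows "\<bar>fip n X0 D\<bar> \<le> sqrt (R2 - a\<^sup>2 / R2) * sqrt (fip n D D)"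
proof -
  define k where "k = a / R2"
  define Y where "Y = X0 - of_real k \<cdot>\<^sub>m Xt"
  have cY: "of_real k \<cdot>\<^sub>m Xt \<in> carrier_mat n n" using c by simp
  have yd: "fip n Y D = fip n X0 D"
    unfolding Y_def using c h by (simp add: fip_minus fip_smult)
  have "fip n Y Y = fip n X0 Y - k * fip n Xt Y"
    unfolding Y_def[of] using c by (simp add: fip_minus fip_smult)
  also have "fip n X0 Y = R2 - k * a"
  proof -
    have "fip n X0 Y = fip n Y X0" by (rule fip_sym)
    also have "\<dots> = fip n X0 X0 - k * fip n Xt X0"
      unfolding Y_def using c by (simp add: fip_minus fip_smult)
    also have "fip n Xt X0 = a" using h(4) fip_sym by metis
    finally show ?thesis using h by simp
  qed
  also have "fip n Xt Y = a - k * R2"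
  proof -
    have "fip n Xt Y = fip n Y Xt" by (rule fip_sym)
    also have "\<dots> = fip n X0 Xt - k * fip n Xt Xt"
      unfolding Y_def using c by (simp add: fip_minus fip_smult)
    finally show ?thesis using h by simp
  qed
  finally have yy: "fip n Y Y = R2 - a\<^sup>2 / R2" using h(5) unfolding k_def by (simp add: field_simps power2_eq_square)
  have "(fip n X0 D)\<^sup>2 \<le> (R2 - a\<^sup>2 / R2) * fip n D D"
    using fip_CS[of n Y D] yd yy by simp
  then have "sqrt ((fip n X0 D)\<^sup>2) \<le> sqrt ((R2 - a\<^sup>2 / R2) * fip n D D)"
    by (rule real_sqrt_le_mono)
  then show ?thesis by (simp add: real_sqrt_mult)
qed

definition mderiv :: "nat \<Rightarrow> real set \<Rightarrow> (real \<Rightarrow> complex mat) \<Rightarrow> complex mat \<Rightarrow> real \<Rightarrow> bool" where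
  "mderiv n S A A' t \<longleftrightarrow> (\<forall>i<n. \<forall>j<n. ((\<lambda>s. A s $$ (i,j)) has_vector_derivative A' $$ (i,j)) (at t within S))"

lemma mderiv_mult:
  assumes cA: "\<forall>s\<in>S. A s \<in> carrier_mat n n" and cB: "\<forall>s\<in>S. B s \<in> carrier_mat n n"
    and cA': "A' \<in> carrier_mat n n" and cB': "B' \<in> carrier_mat n n" and t: "t \<in> S"
    and dA: "mderiv n S A A' t" and dB: "mderiv n S B B' t"
  shows "mderiv n S (\<lambda>s. A s * B s) (A' * B t + A t * B') t"
  unfolding mderiv_def
proof (intro allI impI)
  fix i j assume ij: "i < n" "j < n"
  have d: "((\<lambda>s. \<Sum>k<n. A s $$ (i,k) * B s $$ (k,j)) has_vector_derivative
          (\<Sum>k<n. A t $$ (i,k) * B' $$ (k,j) + A' $$ (i,k) * B t $$ (k,j))) (at t within S)"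
    using dA dB ij unfolding mderiv_def
    by (intro has_vector_derivative_sum has_vector_derivative_mult) auto
  have e: "(\<Sum>k<n. A t $$ (i,k) * B' $$ (k,j) + A' $$ (i,k) * B t $$ (k,j)) = (A' * B t + A t * B') $$ (i,j)"
  proof -
    have "A t \<in> carrier_mat n n" "B t \<in> carrier_mat n n" using cA cB t by auto
    then show ?thesis using cA' cB' ij by (simp add: scalar_prod_def atLeast0LessThan sum.distrib add.commute)
  qed
  show "((\<lambda>s. (A s * B s) $$ (i,j)) has_vector_derivative (A' * B t + A t * B') $$ (i,j)) (at t within S)"
    unfolding e[symmetric]
    by (rule has_vector_derivative_transform_within[OF d, where d=1]) (use cA cB ij t in \<open>auto simp: mult_entry\<close>)
qed

lemma mderiv_const: "mderiv n S (\<lambda>s. C) (0\<^sub>m n n) t"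
  by (simp add: mderiv_def)

lemma mderiv_dagger:
  assumes cA: "\<forall>s\<in>S. A s \<in> carrier_mat n n" and cA': "A' \<in> carrier_mat n n" and t: "t \<in> S"
    and dA: "mderiv n S A A' t"
  shows "mderiv n S (\<lambda>s. dagger (A s)) (dagger A') t"
  unfolding mderiv_def
proof (intro allI impI)
  fix i j assume ij: "i < n" "j < n"
  have d: "((\<lambda>s. cnj (A s $$ (j,i))) has_vector_derivative cnj (A' $$ (j,i))) (at t within S)"
    using dA ij unfolding mderiv_def by (intro has_vector_derivative_cnj) auto
  have e: "dagger A' $$ (i,j) = cnj (A' $$ (j,i))" using cA' ij by simp
  show "((\<lambda>s. dagger (A s) $$ (i,j)) has_vector_derivative dagger A' $$ (i,j)) (at t within S)"
    unfolding e
    by (rule has_vector_derivative_transform_within[OF d, where d=1]) (use cA ij t in auto)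
qed

lemma mderiv_trace:
  assumes cA: "\<forall>s\<in>S. A s \<in> carrier_mat n n" and cA': "A' \<in> carrier_mat n n" and t: "t \<in> S"
    and dA: "mderiv n S A A' t"
  shows "((\<lambda>s. mtrace (A s)) has_vector_derivative mtrace A') (at t within S)"
proof -
  have d: "((\<lambda>s. \<Sum>i<n. A s $$ (i,i)) has_vector_derivative (\<Sum>i<n. A' $$ (i,i))) (at t within S)"
    using dA unfolding mderiv_def by (intro has_vector_derivative_sum) auto
  show ?thesis unfolding mtrace_carrier[OF cA']
    by (rule has_vector_derivative_transform_within[OF d, where d=1]) (use cA t in \<open>auto simp: mtrace_carrier\<close>)
qed

lemma mderiv_cong:
  assumes "mderiv n S A A' t" "A' = B'" shows "mderiv n S A B' t"
  using assms by simp

lemma mderiv_const_zero: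
  assumes "convex S" "\<forall>t\<in>S. mderiv n S A (0\<^sub>m n n) t" "t \<in> S" "s \<in> S" "i < n" "j < n"
  shows "A t $$ (i,j) = A s $$ (i,j)"
proof -
  have "\<And>x. x \<in> S \<Longrightarrow> ((\<lambda>s. A s $$ (i,j)) has_vector_derivative 0) (at x within S)"
    using assms unfolding mderiv_def by fastforce
  then obtain c where "\<And>x. x \<in> S \<Longrightarrow> A x $$ (i,j) = c"
    using has_vector_derivative_zero_constant[OF assms(1)] by blast
  then show ?thesis using assms by simp
qed

lemma arc_piece:
  fixes g g' f :: "real \<Rightarrow> real" and a b :: real
  assumes ab: "a \<le> b"
    and fc: "continuous_on {a..b} f"
    and gc: "continuous_on {a..b} g"
    and gd: "\<And>t. a < t \<Longrightarrow> t < b \<Longrightarrow> (g has_real_derivative g' t) (at t)"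
    and gin: "\<And>t. a < t \<Longrightarrow> t < b \<Longrightarrow> -1 < g t \<and> g t < 1"
    and ga: "g a = 1"
    and bd: "\<And>t. a < t \<Longrightarrow> t < b \<Longrightarrow> \<bar>g' t\<bar> \<le> sqrt (1 - (g t)\<^sup>2) * f t"
    and gb: "\<bar>g b\<bar> \<le> 1"
  shows "arccos (g b) \<le> integral {a..b} f"
proof -
  define F where "F t = arccos (g t) - integral {a..t} f" for t
  have "F b \<le> F a"
  proof (rule DERIV_nonpos_imp_decreasing_open[OF ab])
    fix x assume x: "a < x" "x < b"
    have i1: "x \<in> interior {a..b}" using x by simp
    have d1: "((\<lambda>u. integral {a..u} f) has_real_derivative f x) (at x)"
      using integral_has_vector_derivative[OF fc, of x] x
      by (simp add: has_real_derivative_iff_has_vector_derivative at_within_interior[OF i1])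
    have s: "sqrt (1 - (g x)\<^sup>2) > 0" using gin[OF x] by (simp add: abs_square_less_1 abs_less_iff)
    have d2: "((\<lambda>t. arccos (g t)) has_real_derivative inverse (- sqrt (1 - (g x)\<^sup>2)) * g' x) (at x)"
      using DERIV_chain2[OF DERIV_arccos gd[OF x]] gin[OF x] by auto
    have "inverse (- sqrt (1 - (g x)\<^sup>2)) * g' x \<le> f x"
    proof -
      have "inverse (- sqrt (1 - (g x)\<^sup>2)) * g' x = - g' x / sqrt (1 - (g x)\<^sup>2)"
        by (simp add: field_simps)
      also have "\<dots> \<le> \<bar>g' x\<bar> / sqrt (1 - (g x)\<^sup>2)"
        using s by (intro divide_right_mono) auto
      also have "\<dots> \<le> f x" using bd[OF x] s by (simp add: divide_le_eq mult.commute)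
      finally show ?thesis .
    qed
    then show "\<exists>y. (F has_real_derivative y) (at x) \<and> y \<le> 0"
      unfolding F_def using DERIV_diff[OF d2 d1] by (intro exI conjI) auto
  next
    have c1: "continuous_on {a..b} (\<lambda>t. arccos (g t))"
    proof -
      have "g ` {a..b} \<subseteq> {-1..1}"
      proof
        fix y assume "y \<in> g ` {a..b}"
        then obtain t where t: "t \<in> {a..b}" "y = g t" by auto
        show "y \<in> {-1..1}"
        proof (cases "t = a \<or> t = b")
          case True then show ?thesis using t ga gb by auto
        next
          case False then show ?thesis using t gin[of t] by auto
        qed
      qed
      then show ?thesis
        by (intro continuous_on_compose2[OF continuous_on_arccos' gc]) auto
    qed
    have c2: "continuous_on {a..b} (\<lambda>t. integral {a..t} f)"
      by (rule indefinite_integral_continuous_1[OF integrable_continuous_real[OF fc]])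
    show "continuous_on {a..b} F" unfolding F_def by (intro continuous_intros c1 c2)
  qed
  then show ?thesis unfolding F_def using ga by simp
qed

lemma arc_bound:
  fixes g g' f :: "real \<Rightarrow> real" and T :: real
  assumes T: "0 \<le> T"
    and fc: "continuous_on {0..T} f"
    and fnn: "\<forall>t\<in>{0..T}. 0 \<le> f t"
    and gd: "\<forall>t\<in>{0..T}. (g has_real_derivative g' t) (at t within {0..T})"
    and gb: "\<forall>t\<in>{0..T}. \<bar>g t\<bar> \<le> 1"
    and g0: "g 0 = 1"
    and bd: "\<forall>t\<in>{0..T}. \<bar>g' t\<bar> \<le> sqrt (1 - (g t)\<^sup>2) * f t"
  shows "arccos (g T) \<le> integral {0..T} f"
proof -
  have gc: "continuous_on {0..T} g"
    using gd by (auto simp: continuous_on_eq_continuous_within intro: DERIV_continuous)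
  define S1 where "S1 = {t\<in>{0..T}. g t = 1}"
  have cS1: "closed S1" unfolding S1_def by (rule continuous_closed_preimage_constant[OF gc]) auto
  have neS1: "S1 \<noteq> {}" using T g0 unfolding S1_def by auto
  have bS1: "bdd_above S1" unfolding S1_def by (rule bdd_aboveI[of _ T]) auto
  define t0 where "t0 = Sup S1"
  have t0S: "t0 \<in> S1" unfolding t0_def by (rule closed_contains_Sup[OF neS1 bS1 cS1])
  have t0r: "0 \<le> t0" "t0 \<le> T" "g t0 = 1" using t0S unfolding S1_def by auto
  have after: "g t \<noteq> 1" if "t0 < t" "t \<le> T" for t
  proof
    assume "g t = 1"
    then have "t \<in> S1" using that t0r unfolding S1_def by auto
    then have "t \<le> t0" unfolding t0_def using bS1 by (rule cSup_upper)
    then show False using that by simp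
  qed
  have piece: "arccos (g b) \<le> integral {0..T} f"
    if b: "t0 \<le> b" "b \<le> T" and gin: "\<And>t. t0 < t \<Longrightarrow> t < b \<Longrightarrow> g t \<noteq> -1" for b
  proof -
    have sub: "{t0..b} \<subseteq> {0..T}" using b t0r by auto
    have "arccos (g b) \<le> integral {t0..b} f"
    proof (rule arc_piece[of t0 b f g g'])
      show "t0 \<le> b" by fact
      show "continuous_on {t0..b} f" using continuous_on_subset[OF fc sub] .
      show "continuous_on {t0..b} g" using continuous_on_subset[OF gc sub] .
      fix t assume t: "t0 < t" "t < b"
      have ti: "t \<in> interior {0..T}" using t b t0r by auto
      show "(g has_real_derivative g' t) (at t)"
        using gd ti at_within_interior[OF ti] interior_subset by fastforce
      have "\<bar>g t\<bar> \<le> 1" using gb t b t0r by auto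
      then show "-1 < g t \<and> g t < 1" using gin[OF t] after[of t] t b by auto
      show "\<bar>g' t\<bar> \<le> sqrt (1 - (g t)\<^sup>2) * f t" using bd t b t0r by auto
    next
      show "g t0 = 1" by fact
      show "\<bar>g b\<bar> \<le> 1" using gb b t0r by auto
    qed
    also have "\<dots> \<le> integral {0..T} f"
      by (rule integral_subset_le[OF sub integrable_continuous_real integrable_continuous_real])
         (use continuous_on_subset[OF fc sub] fc fnn in auto)
    finally show ?thesis .
  qed
  define S2 where "S2 = {t\<in>{t0..T}. g t = -1}"
  show ?thesis
  proof (cases "S2 = {}")
    case True
    show ?thesis
      by (rule piece) (use True t0r in \<open>auto simp: S2_def\<close>)
  next
    case False
    have cS2: "closed S2" unfolding S2_def
      by (rule continuous_closed_preimage_constant[OF continuous_on_subset[OF gc]]) (use t0r in auto)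
    have bS2: "bdd_below S2" unfolding S2_def by (rule bdd_belowI[of _ t0]) auto
    define b where "b = Inf S2"
    have bS: "b \<in> S2" unfolding b_def by (rule closed_contains_Inf[OF False bS2 cS2])
    have br: "t0 \<le> b" "b \<le> T" "g b = -1" using bS unfolding S2_def by auto
    have "arccos (g b) \<le> integral {0..T} f"
    proof (rule piece[OF br(1,2)])
      fix t assume t: "t0 < t" "t < b"
      show "g t \<noteq> -1"
      proof
        assume "g t = -1"
        then have "t \<in> S2" using t br unfolding S2_def by auto
        then have "b \<le> t" unfolding b_def using bS2 by (rule cInf_lower)
        then show False using t by simp
      qed
    qed
    moreover have "arccos (g T) \<le> arccos (g b)" using br gb T arccos_ubound[of "g T"] by (auto simp: abs_le_iff)
    ultimately show ?thesis by linarith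
  qed
qed

lemma fip_zero:
  assumes "A \<in> carrier_mat n n" "fip n A A = 0"
  shows "A = 0\<^sub>m n n"
proof (rule eq_matI)
  fix i j assume ij: "i < dim_row (0\<^sub>m n n :: complex mat)" "j < dim_col (0\<^sub>m n n :: complex mat)"
  have nn: "\<And>i k. 0 \<le> Re (A $$ (i,k)) * Re (A $$ (i,k)) + Im (A $$ (i,k)) * Im (A $$ (i,k))" by simp
  have "\<forall>i\<in>{..<n}. (\<Sum>k<n. Re (A $$ (i,k)) * Re (A $$ (i,k)) + Im (A $$ (i,k)) * Im (A $$ (i,k))) = 0"
    using assms(2) unfolding fip_def by (subst sum_nonneg_eq_0_iff[symmetric]) (auto intro: sum_nonneg)
  then have "(\<Sum>k<n. Re (A $$ (i,k)) * Re (A $$ (i,k)) + Im (A $$ (i,k)) * Im (A $$ (i,k))) = 0" using ij by auto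
  then have "Re (A $$ (i,j)) * Re (A $$ (i,j)) + Im (A $$ (i,j)) * Im (A $$ (i,j)) = 0"
    using ij by (subst (asm) sum_nonneg_eq_0_iff) auto
  then have "Re (A $$ (i,j)) = 0 \<and> Im (A $$ (i,j)) = 0"
    by (metis add_nonneg_eq_0_iff mult_eq_0_iff zero_le_square)
  then show "A $$ (i,j) = 0\<^sub>m n n $$ (i,j)" using ij by (simp add: complex_eq_iff)
qed (use assms in auto)

definition mcont :: "nat \<Rightarrow> real set \<Rightarrow> (real \<Rightarrow> complex mat) \<Rightarrow> bool" where
  "mcont n S A \<longleftrightarrow> (\<forall>i<n. \<forall>j<n. continuous_on S (\<lambda>t. A t $$ (i,j)))"

lemma mcont_mult:
  assumes "\<forall>s\<in>S. A s \<in> carrier_mat n n" "\<forall>s\<in>S. B s \<in> carrier_mat n n" "mcont n S A" "mcont n S B"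
  shows "mcont n S (\<lambda>s. A s * B s)"
  unfolding mcont_def
proof (intro allI impI)
  fix i j assume ij: "i < n" "j < n"
  have "continuous_on S (\<lambda>s. \<Sum>k<n. A s $$ (i,k) * B s $$ (k,j))"
    using assms(3,4) ij unfolding mcont_def by (intro continuous_intros) auto
  then show "continuous_on S (\<lambda>s. (A s * B s) $$ (i,j))"
    by (rule continuous_on_cong[THEN iffD1, rotated 2]) (use assms(1,2) ij in \<open>auto simp: mult_entry\<close>)
qed

lemma mcont_minus:
  assumes "\<forall>s\<in>S. B s \<in> carrier_mat n n" "mcont n S A" "mcont n S B"
  shows "mcont n S (\<lambda>s. A s - B s)"
  unfolding mcont_def
proof (intro allI impI)
  fix i j assume ij: "i < n" "j < n"
  have "continuous_on S (\<lambda>s. A s $$ (i,j) - B s $$ (i,j))"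
    using assms(2,3) ij unfolding mcont_def by (intro continuous_intros) auto
  then show "continuous_on S (\<lambda>s. (A s - B s) $$ (i,j))"
    by (rule continuous_on_cong[THEN iffD1, rotated 2]) (use assms(1) ij in auto)
qed

lemma mcont_smult:
  assumes "\<forall>s\<in>S. A s \<in> carrier_mat n n" "mcont n S A"
  shows "mcont n S (\<lambda>s. c \<cdot>\<^sub>m A s)"
  unfolding mcont_def
proof (intro allI impI)
  fix i j assume ij: "i < n" "j < n"
  have "continuous_on S (\<lambda>s. c * A s $$ (i,j))"
    using assms(2) ij unfolding mcont_def by (intro continuous_intros) auto
  then show "continuous_on S (\<lambda>s. (c \<cdot>\<^sub>m A s) $$ (i,j))"
    by (rule continuous_on_cong[THEN iffD1, rotated 2]) (use assms(1) ij in auto)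
qed

lemma mcont_fip:
  assumes "mcont n S A"
  shows "continuous_on S (\<lambda>s. fip n (A s) (A s))"
  using assms unfolding fip_def mcont_def by (intro continuous_intros) auto

lemma mderiv_mcont:
  assumes "\<forall>t\<in>S. mderiv n S A (A' t) t"
  shows "mcont n S A"
  unfolding mcont_def
proof (intro allI impI)
  fix i j assume ij: "i < n" "j < n"
  show "continuous_on S (\<lambda>t. A t $$ (i,j))"
    using assms ij unfolding mderiv_def by (intro continuous_on_vector_derivative) auto
qed

lemma comm_sq:
  fixes P H :: "complex mat"
  assumes cP: "P \<in> carrier_mat n n" and cH: "H \<in> carrier_mat n n"
  shows "mtrace ((H * P - P * H) * (H * P - P * H)) = - 2 * mtrace (P * P * H * H - (P * H) * (P * H))"
proof -
  have c: "H * P \<in> carrier_mat n n" "P * H \<in> carrier_mat n n" "P * P \<in> carrier_mat n n" "H * H \<in> carrier_mat n n"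
    using cP cH by auto
  have e: "(H * P - P * H) * (H * P - P * H) = (H * P) * (H * P) - (H * P) * (P * H) - ((P * H) * (H * P) - (P * H) * (P * H))"
  proof -
    have cZ: "H * P - P * H \<in> carrier_mat n n" using c by (simp add: minus_carrier_mat)
    show ?thesis
      unfolding minus_mult_distrib_mat[OF c(1) c(2) cZ] mult_minus_distrib_mat[OF c(1) c(1) c(2)]
        mult_minus_distrib_mat[OF c(2) c(1) c(2)] ..
  qed
  note a3 = assoc_mult_mat[of _ n n _ n _ n]
  have t1: "mtrace ((H * P) * (H * P)) = mtrace ((P * H) * (P * H))"
  proof -
    have "mtrace ((H * P) * (H * P)) = mtrace (H * (P * (H * P)))" by (simp only: a3[OF cH cP c(1)])
    also have "\<dots> = mtrace ((P * (H * P)) * H)" using cP cH by (intro mtrace_comm) auto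
    also have "\<dots> = mtrace ((P * H) * (P * H))"
      by (simp only: a3[OF cP c(1) cH] a3[OF cH cP cH] a3[OF cP cH c(2)])
    finally show ?thesis .
  qed
  have t2: "mtrace ((H * P) * (P * H)) = mtrace (P * P * H * H)"
  proof -
    have "mtrace ((H * P) * (P * H)) = mtrace (H * (P * P * H))"
      by (simp only: a3[OF cH cP c(2)] a3[OF cP cP cH])
    also have "\<dots> = mtrace ((P * P * H) * H)" using cP cH by (intro mtrace_comm) auto
    finally show ?thesis .
  qed
  have t3: "mtrace ((P * H) * (H * P)) = mtrace (P * P * H * H)"
  proof -
    have "mtrace ((P * H) * (H * P)) = mtrace (P * (H * H * P))"
      by (simp only: a3[OF cP cH c(1)] a3[OF cH cH cP])
    also have "\<dots> = mtrace ((H * H * P) * P)" using cP cH by (intro mtrace_comm) auto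
    also have "\<dots> = mtrace ((H * H) * (P * P))" by (simp only: a3[OF c(4) cP cP])
    also have "\<dots> = mtrace ((P * P) * (H * H))" using cP cH by (intro mtrace_comm) auto
    also have "\<dots> = mtrace (P * P * H * H)" by (simp only: a3[OF c(3) cH cH])
    finally show ?thesis .
  qed
  have "mtrace ((H * P - P * H) * (H * P - P * H)) =
        mtrace ((H * P) * (H * P)) - mtrace ((H * P) * (P * H)) - (mtrace ((P * H) * (H * P)) - mtrace ((P * H) * (P * H)))"
  proof -
    have q: "H * P * (H * P) \<in> carrier_mat n n" "H * P * (P * H) \<in> carrier_mat n n"
      "P * H * (H * P) \<in> carrier_mat n n" "P * H * (P * H) \<in> carrier_mat n n" using c by auto
    show ?thesis unfolding e
      by (simp add: mtrace_minus[OF minus_carrier_mat[OF q(2)] minus_carrier_mat[OF q(4)]]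
          mtrace_minus[OF q(1) q(2)] mtrace_minus[OF q(3) q(4)])
  qed
  also have "\<dots> = 2 * mtrace ((P * H) * (P * H)) - 2 * mtrace (P * P * H * H)"
    using t1 t2 t3 by simp
  also have "\<dots> = - 2 * mtrace (P * P * H * H - (P * H) * (P * H))"
  proof -
    have q: "P * P * H * H \<in> carrier_mat n n" "P * H * (P * H) \<in> carrier_mat n n" using c cP cH by auto
    show ?thesis by (simp add: mtrace_minus[OF q] algebra_simps)
  qed
  finally show ?thesis .
qed

lemma fip_shift:
  fixes A B :: "complex mat"
  assumes cA: "A \<in> carrier_mat n n" and cB: "B \<in> carrier_mat n n"
    and hA: "dagger A = A" and hB: "dagger B = B" and tA: "mtrace A = 1" and tB: "mtrace B = 1"
    and n: "n \<ge> 1"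
  shows "fip n (A - of_real (1 / real n) \<cdot>\<^sub>m 1\<^sub>m n) (B - of_real (1 / real n) \<cdot>\<^sub>m 1\<^sub>m n) = Re (mtrace (A * B)) - 1 / real n"
proof -
  define c where "c = 1 / real n"
  define E where "E = of_real c \<cdot>\<^sub>m (1\<^sub>m n :: complex mat)"
  have cE: "E \<in> carrier_mat n n" unfolding E_def by simp
  have c1: "(1\<^sub>m n :: complex mat) \<in> carrier_mat n n" by simp
  have h1: "dagger (1\<^sub>m n) = 1\<^sub>m n" by simp
  have cBE: "B - E \<in> carrier_mat n n" using cB cE by (simp add: minus_carrier_mat)
  have f1A: "fip n (1\<^sub>m n) A = 1"
    using fip_trace[OF c1 cA hA] cA tA by simp
  have fB1: "fip n B (1\<^sub>m n) = 1"
    using fip_trace[OF cB c1 h1] cB tB by simp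
  have f11: "fip n (1\<^sub>m n) (1\<^sub>m n) = real n"
    using fip_trace[OF c1 c1 h1] by (simp add: mtrace_one)
  have fBA: "fip n B A = Re (mtrace (A * B))"
    using fip_trace[OF cB cA hA] mtrace_comm[OF cA cB] by simp
  have "fip n (A - E) (B - E) = fip n A (B - E) - c * fip n (1\<^sub>m n) (B - E)"
    unfolding E_def using cA by (simp add: fip_minus fip_smult)
  also have "fip n A (B - E) = fip n B A - c * fip n (1\<^sub>m n) A"
    using fip_sym[of n A "B - E"] fip_minus[OF cB cE, of A] fip_smult[OF c1, of c A] unfolding E_def by simp
  also have "fip n (1\<^sub>m n) (B - E) = fip n B (1\<^sub>m n) - c * fip n (1\<^sub>m n) (1\<^sub>m n)"
    using fip_sym[of n "1\<^sub>m n" "B - E"] fip_minus[OF cB cE, of "1\<^sub>m n"] fip_smult[OF c1, of c "1\<^sub>m n"] unfolding E_def by simp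
  finally have "fip n (A - E) (B - E) = Re (mtrace (A * B)) - c - c * (1 - c * real n)"
    using f1A fB1 f11 fBA by simp
  also have "\<dots> = Re (mtrace (A * B)) - c" using n unfolding c_def by (simp add: field_simps)
  finally show ?thesis unfolding E_def c_def .
qed

lemma fip_shift_D:
  fixes A D :: "complex mat"
  assumes cA: "A \<in> carrier_mat n n" and cD: "D \<in> carrier_mat n n"
    and hD: "dagger D = D" and tD: "mtrace D = 0"
  shows "fip n (A - of_real c \<cdot>\<^sub>m 1\<^sub>m n) D = Re (mtrace (A * D))"
proof -
  have c1: "(1\<^sub>m n :: complex mat) \<in> carrier_mat n n" by simp
  have "fip n (A - of_real c \<cdot>\<^sub>m 1\<^sub>m n) D = fip n A D - c * fip n (1\<^sub>m n) D"
    using cA by (simp add: fip_minus fip_smult)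
  also have "fip n (1\<^sub>m n) D = 0" using fip_trace[OF c1 cD hD] cD tD by simp
  finally show ?thesis using fip_trace[OF cA cD hD] by simp
qed




lemma sqrt_alg:
  fixes R a F :: real
  assumes R: "R > 0"
  shows "sqrt (R - a\<^sup>2 / R) * sqrt F / R = sqrt (1 - (a / R)\<^sup>2) * sqrt (F / R)"
proof -
  have "sqrt (R - a\<^sup>2 / R) * sqrt F / R = sqrt ((R - a\<^sup>2 / R) * F / R\<^sup>2)"
    using R by (simp add: real_sqrt_mult real_sqrt_divide)
  also have "(R - a\<^sup>2 / R) * F / R\<^sup>2 = (1 - (a / R)\<^sup>2) * (F / R)"
    using R by (simp add: field_simps power2_eq_square)
  also have "sqrt \<dots> = sqrt (1 - (a / R)\<^sup>2) * sqrt (F / R)" by (rule real_sqrt_mult)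
  finally show ?thesis .
qed

lemma mult_carrier_sq[simp]: "A \<in> carrier_mat n n \<Longrightarrow> B \<in> carrier_mat n n \<Longrightarrow> A * B \<in> carrier_mat n n"
  by simp

lemma dagger_carrier_sq[simp]: "A \<in> carrier_mat n n \<Longrightarrow> dagger A \<in> carrier_mat n n"
  by simp

theorem theorem1:
  fixes N :: nat and \<rho> \<sigma> :: "complex mat" and T :: real
    and H U :: "real \<Rightarrow> complex mat"
  assumes "N \<ge> 1"
    and "density_op N \<rho>" and "density_op N \<sigma>"
    and "same_spectrum \<rho> \<sigma>"
    and "\<rho> \<noteq> (1 / of_nat N) \<cdot>\<^sub>m 1\<^sub>m N"
    and "T > 0"
    and "\<forall>t\<in>{0..T}. hermitian N (H t)"
    and "\<forall>i<N. \<forall>j<N. continuous_on {0..T} (\<lambda>t. H t $$ (i,j))"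
    and "generates N T H U"
    and "U T * \<rho> * dagger (U T) = \<sigma>"
  shows "T \<ge> Theta N \<rho> \<sigma> / QTheta N T H (\<lambda>t. U t * \<rho> * dagger (U t))"
proof -
  note a3 = assoc_mult_mat[of _ N N _ N _ N]
  define S where "S = {0..T}"
  have convS: "convex S" unfolding S_def by (rule convex_real_interval)
  have T0: "0 \<in> S" "T \<in> S" using assms(6) by (auto simp: S_def)
  have c\<rho>: "\<rho> \<in> carrier_mat N N" and h\<rho>: "dagger \<rho> = \<rho>" and t\<rho>: "mtrace \<rho> = 1"
    using assms(2) by (auto simp: density_op_def hermitian_def)
  have cH: "\<And>t. t \<in> S \<Longrightarrow> H t \<in> carrier_mat N N" and hH: "\<And>t. t \<in> S \<Longrightarrow> dagger (H t) = H t"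
    using assms(7) by (auto simp: S_def hermitian_def)
  have U0: "U 0 = 1\<^sub>m N" using assms(9) by (simp add: generates_def)
  have cU: "\<And>t. t \<in> S \<Longrightarrow> U t \<in> carrier_mat N N" using assms(9) by (simp add: generates_def S_def)
  have gU: "\<And>t i j. t \<in> S \<Longrightarrow> i < N \<Longrightarrow> j < N \<Longrightarrow> ((\<lambda>s. U s $$ (i,j)) has_vector_derivative
      (- \<i> * ((H t * U t) $$ (i,j)))) (at t within S)"
    using assms(9) by (simp add: generates_def S_def)
  have cUs: "\<forall>s\<in>S. U s \<in> carrier_mat N N" and cUds: "\<forall>s\<in>S. dagger (U s) \<in> carrier_mat N N"
    using cU by auto
  define Ud where "Ud t = (- \<i>) \<cdot>\<^sub>m (H t * U t)" for t
  have cUd: "Ud t \<in> carrier_mat N N" if t: "t \<in> S" for t using cU[OF t] cH[OF t] by (simp add: Ud_def)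
  have dU: "\<forall>t\<in>S. mderiv N S U (Ud t) t"
  proof
    fix t assume t: "t \<in> S"
    have "H t * U t \<in> carrier_mat N N" using cU[OF t] cH[OF t] by simp
    then have "dim_row (H t * U t) = N" "dim_col (H t * U t) = N" by auto
    then show "mderiv N S U (Ud t) t" using gU[OF t] by (simp add: mderiv_def Ud_def)
  qed
  have dUd: "dagger (Ud t) = \<i> \<cdot>\<^sub>m (dagger (U t) * H t)" if t: "t \<in> S" for t
    using cU[OF t] cH[OF t] hH[OF t] by (simp add: Ud_def dagger_smult dagger_mult)
  have unit: "\<And>t. t \<in> S \<Longrightarrow> dagger (U t) * U t = 1\<^sub>m N"
  proof -
    have d: "\<forall>t\<in>S. mderiv N S (\<lambda>s. dagger (U s) * U s) (0\<^sub>m N N) t"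
    proof
      fix t assume t: "t \<in> S"
      have "mderiv N S (\<lambda>s. dagger (U s) * U s) (dagger (Ud t) * U t + dagger (U t) * Ud t) t"
        by (rule mderiv_mult[OF cUds cUs _ cUd[OF t] t mderiv_dagger[OF cUs cUd[OF t] t]])
           (use dU t cUd in auto)
      moreover have "dagger (Ud t) * U t + dagger (U t) * Ud t = 0\<^sub>m N N"
      proof -
        have c1: "dagger (U t) * H t \<in> carrier_mat N N" "H t * U t \<in> carrier_mat N N"
          "dagger (U t) \<in> carrier_mat N N" "U t \<in> carrier_mat N N" "H t \<in> carrier_mat N N"
          using cU[OF t] cH[OF t] by auto
        have "dagger (Ud t) * U t + dagger (U t) * Ud t
            = \<i> \<cdot>\<^sub>m (dagger (U t) * H t * U t) + (- \<i>) \<cdot>\<^sub>m (dagger (U t) * (H t * U t))"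
          unfolding dUd[OF t]
          by (simp add: Ud_def mult_smult_assoc_mat[OF c1(1) c1(4)] mult_smult_distrib[OF c1(3) c1(2)])
        also have "\<dots> = 0\<^sub>m N N"
          by (simp only: a3[OF c1(3) c1(5) c1(4)]) (rule eq_matI, use c1 in auto)
        finally show ?thesis .
      qed
      ultimately show "mderiv N S (\<lambda>s. dagger (U s) * U s) (0\<^sub>m N N) t" by simp
    qed
    fix t assume t: "t \<in> S"
    show "dagger (U t) * U t = 1\<^sub>m N"
    proof (rule eq_matI)
      fix i j assume ij: "i < dim_row (1\<^sub>m N :: complex mat)" "j < dim_col (1\<^sub>m N :: complex mat)"
      have "(dagger (U t) * U t) $$ (i,j) = (dagger (U 0) * U 0) $$ (i,j)"
        by (rule mderiv_const_zero[OF convS d t T0(1)]) (use ij in auto)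
      then show "(dagger (U t) * U t) $$ (i,j) = 1\<^sub>m N $$ (i,j)" using ij U0 by simp
    qed (use cU[OF t] in auto)
  qed
  define P where "P t = U t * \<rho> * dagger (U t)" for t
  have cP: "P t \<in> carrier_mat N N" if t: "t \<in> S" for t
    using cU[OF t] c\<rho> by (simp add: P_def)
  have cPs: "\<forall>s\<in>S. P s \<in> carrier_mat N N" using cP by auto
  have hP: "dagger (P t) = P t" if t: "t \<in> S" for t
  proof -
    have c: "U t \<in> carrier_mat N N" "U t * \<rho> \<in> carrier_mat N N" "dagger (U t) \<in> carrier_mat N N"
      using cU[OF t] c\<rho> by auto
    have "dagger (P t) = dagger (dagger (U t)) * dagger (U t * \<rho>)"
      unfolding P_def by (rule dagger_mult[OF c(2) c(3)])
    also have "\<dots> = U t * (\<rho> * dagger (U t))"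
      using dagger_mult[OF c(1) c\<rho>] h\<rho> by simp
    also have "\<dots> = P t" unfolding P_def by (rule a3[OF c(1) c\<rho> c(3), symmetric])
    finally show ?thesis .
  qed
  have trP: "mtrace (P t) = 1" if t: "t \<in> S" for t
  proof -
    have c: "U t \<in> carrier_mat N N" "U t * \<rho> \<in> carrier_mat N N" "dagger (U t) \<in> carrier_mat N N"
      using cU[OF t] c\<rho> by auto
    have "mtrace (P t) = mtrace (dagger (U t) * (U t * \<rho>))"
      unfolding P_def by (rule mtrace_comm[OF c(2) c(3)])
    also have "\<dots> = mtrace (dagger (U t) * U t * \<rho>)" by (simp only: a3[OF c(3) c(1) c\<rho>])
    also have "\<dots> = mtrace \<rho>" using unit[OF t] c\<rho> by simp
    finally show ?thesis using t\<rho> by simp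
  qed
  have PP: "P t * P t = U t * (\<rho> * \<rho>) * dagger (U t)" if t: "t \<in> S" for t
  proof -
    have c: "U t \<in> carrier_mat N N" "U t * \<rho> \<in> carrier_mat N N" "dagger (U t) \<in> carrier_mat N N"
      "\<rho> * dagger (U t) \<in> carrier_mat N N" "dagger (U t) * U t \<in> carrier_mat N N"
      using cU[OF t] c\<rho> by auto
    have "P t * P t = (U t * \<rho>) * (dagger (U t) * (U t * \<rho> * dagger (U t)))"
      unfolding P_def by (rule a3[OF c(2) c(3) cP[OF t, unfolded P_def]])
    also have "dagger (U t) * (U t * \<rho> * dagger (U t)) = (dagger (U t) * U t) * (\<rho> * dagger (U t))"
      by (simp only: a3[OF c(3) c(2) c(3), symmetric] a3[OF c(3) c(1) c\<rho>, symmetric] a3[OF c(5) c\<rho> c(3)])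
    also have "\<dots> = \<rho> * dagger (U t)" using unit[OF t] left_mult_one_mat[OF c(4)] by simp
    also have "U t * \<rho> * (\<rho> * dagger (U t)) = U t * (\<rho> * \<rho>) * dagger (U t)"
      by (simp only: a3[OF c(2) c\<rho> c(3), symmetric] a3[OF c(1) c\<rho> c\<rho>])
    finally show ?thesis .
  qed
  have trPP: "mtrace (P t * P t) = mtrace (\<rho> * \<rho>)" if t: "t \<in> S" for t
  proof -
    have c: "U t \<in> carrier_mat N N" "U t * (\<rho> * \<rho>) \<in> carrier_mat N N" "dagger (U t) \<in> carrier_mat N N"
      "\<rho> * \<rho> \<in> carrier_mat N N"
      using cU[OF t] c\<rho> by auto
    have "mtrace (P t * P t) = mtrace (dagger (U t) * (U t * (\<rho> * \<rho>)))"
      unfolding PP[OF t] by (rule mtrace_comm[OF c(2) c(3)])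
    also have "\<dots> = mtrace (dagger (U t) * U t * (\<rho> * \<rho>))" by (simp only: a3[OF c(3) c(1) c(4)])
    also have "\<dots> = mtrace (\<rho> * \<rho>)" using unit[OF t] left_mult_one_mat[OF c(4)] by simp
    finally show ?thesis .
  qed
  have P0: "P 0 = \<rho>" using U0 c\<rho> by (simp add: P_def)
  have PT: "P T = \<sigma>" using assms(10) by (simp add: P_def)
  define D where "D t = (- \<i>) \<cdot>\<^sub>m (H t * P t - P t * H t)" for t
  have cD: "D t \<in> carrier_mat N N" if t: "t \<in> S" for t
    using cP[OF t] cH[OF t] by (simp add: D_def minus_carrier_mat)
  have dP: "\<forall>t\<in>S. mderiv N S P (D t) t"
  proof
    fix t assume t: "t \<in> S"
    have c: "U t \<in> carrier_mat N N" "U t * \<rho> \<in> carrier_mat N N" "dagger (U t) \<in> carrier_mat N N"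
      "H t \<in> carrier_mat N N" "H t * U t \<in> carrier_mat N N" "dagger (U t) * H t \<in> carrier_mat N N"
      "P t \<in> carrier_mat N N" "Ud t * \<rho> \<in> carrier_mat N N"
      using cU[OF t] c\<rho> cH[OF t] cP[OF t] cUd[OF t] by auto
    have cUr: "\<forall>s\<in>S. U s * \<rho> \<in> carrier_mat N N" using cU c\<rho> by auto
    have d1: "mderiv N S (\<lambda>s. U s * \<rho>) (Ud t * \<rho> + U t * 0\<^sub>m N N) t"
      by (rule mderiv_mult[OF cUs _ cUd[OF t] _ t _ mderiv_const]) (use c\<rho> dU t in auto)
    have d1': "mderiv N S (\<lambda>s. U s * \<rho>) (Ud t * \<rho>) t"
      using d1 right_mult_zero_mat[OF c(1), of N] right_add_zero_mat[OF c(8)] by simp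
    have d2: "mderiv N S (\<lambda>s. U s * \<rho> * dagger (U s)) (Ud t * \<rho> * dagger (U t) + U t * \<rho> * dagger (Ud t)) t"
      by (rule mderiv_mult[OF cUr cUds c(8) _ t d1' mderiv_dagger[OF cUs cUd[OF t] t]])
         (use dU t cUd[OF t] in auto)
    have e1: "Ud t * \<rho> * dagger (U t) = (- \<i>) \<cdot>\<^sub>m (H t * P t)"
    proof -
      have "Ud t * \<rho> * dagger (U t) = ((- \<i>) \<cdot>\<^sub>m (H t * U t * \<rho>)) * dagger (U t)"
        unfolding Ud_def by (simp only: mult_smult_assoc_mat[OF c(5) c\<rho>])
      also have "\<dots> = (- \<i>) \<cdot>\<^sub>m (H t * U t * \<rho> * dagger (U t))"
        by (rule mult_smult_assoc_mat[OF mult_carrier_sq[OF c(5) c\<rho>] c(3)])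
      also have "H t * U t * \<rho> * dagger (U t) = H t * P t"
        unfolding P_def by (simp only: a3[OF c(4) c(1) c\<rho>] a3[OF c(4) c(2) c(3)])
      finally show ?thesis .
    qed
    have e2: "U t * \<rho> * dagger (Ud t) = \<i> \<cdot>\<^sub>m (P t * H t)"
    proof -
      have "U t * \<rho> * dagger (Ud t) = \<i> \<cdot>\<^sub>m (U t * \<rho> * (dagger (U t) * H t))"
        unfolding dUd[OF t] by (rule mult_smult_distrib[OF c(2) c(6)])
      also have "U t * \<rho> * (dagger (U t) * H t) = P t * H t"
        unfolding P_def by (simp only: a3[OF c(2) c(3) c(4)])
      finally show ?thesis .
    qed
    have eq: "Ud t * \<rho> * dagger (U t) + U t * \<rho> * dagger (Ud t) = D t"
      unfolding e1 e2 D_def by (rule eq_matI) (use c in \<open>auto simp: right_diff_distrib\<close>)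
    have Pf: "(\<lambda>s. U s * \<rho> * dagger (U s)) = P" by (simp add: P_def fun_eq_iff)
    show "mderiv N S P (D t) t" using d2 unfolding eq Pf .
  qed
  have hD: "dagger (D t) = D t" if t: "t \<in> S" for t
  proof -
    have c: "H t * P t \<in> carrier_mat N N" "P t * H t \<in> carrier_mat N N"
      using cP[OF t] cH[OF t] by auto
    have "dagger (D t) = \<i> \<cdot>\<^sub>m (dagger (H t * P t) - dagger (P t * H t))"
      unfolding D_def by (simp add: dagger_smult dagger_minus[OF c])
    also have "\<dots> = \<i> \<cdot>\<^sub>m (P t * H t - H t * P t)"
      using dagger_mult[OF cH[OF t] cP[OF t]] dagger_mult[OF cP[OF t] cH[OF t]] hP[OF t] hH[OF t] by simp
    also have "\<dots> = D t"
      unfolding D_def by (rule eq_matI) (use c cP[OF t] cH[OF t] in \<open>auto simp: right_diff_distrib\<close>)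
    finally show ?thesis .
  qed
  have trD: "mtrace (D t) = 0" if t: "t \<in> S" for t
  proof -
    have c: "H t * P t \<in> carrier_mat N N" "P t * H t \<in> carrier_mat N N"
      using cP[OF t] cH[OF t] by auto
    show ?thesis unfolding D_def
      by (simp add: mtrace_smult[OF minus_carrier_mat[OF c(2)]] mtrace_minus[OF c] mtrace_comm[OF cH[OF t] cP[OF t]])
  qed
  have trPD: "mtrace (P t * D t) = 0" if t: "t \<in> S" for t
  proof -
    have c: "H t * P t \<in> carrier_mat N N" "P t * H t \<in> carrier_mat N N" "P t * P t \<in> carrier_mat N N"
      "P t * (H t * P t) \<in> carrier_mat N N" "P t * (P t * H t) \<in> carrier_mat N N"
      using cP[OF t] cH[OF t] by auto
    have "P t * D t = (- \<i>) \<cdot>\<^sub>m (P t * (H t * P t) - P t * (P t * H t))"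
      unfolding D_def by (simp add: mult_smult_distrib[OF cP[OF t] minus_carrier_mat[OF c(2)]] mult_minus_distrib_mat[OF cP[OF t] c(1) c(2)])
    moreover have "mtrace (P t * (H t * P t)) = mtrace (H t * (P t * P t))"
      using mtrace_comm[OF cP[OF t] c(1)] a3[OF cH[OF t] cP[OF t] cP[OF t]] by simp
    moreover have "mtrace (P t * (P t * H t)) = mtrace (H t * (P t * P t))"
      using mtrace_comm[OF c(3) cH[OF t]] a3[OF cP[OF t] cP[OF t] cH[OF t]] by simp
    ultimately show ?thesis
      by (simp add: mtrace_smult[OF minus_carrier_mat[OF c(5)]] mtrace_minus[OF c(4) c(5)])
  qed
  define c where "c = 1 / real N"
  define E where "E = (of_real c :: complex) \<cdot>\<^sub>m (1\<^sub>m N :: complex mat)"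
  have cE: "E \<in> carrier_mat N N" by (simp add: E_def)
  define X0 where "X0 = \<rho> - E"
  define Xt where "Xt t = P t - E" for t
  have cX0: "X0 \<in> carrier_mat N N" using cE by (simp add: X0_def minus_carrier_mat)
  have cXt: "Xt t \<in> carrier_mat N N" for t using cE by (simp add: Xt_def minus_carrier_mat)
  define R2 where "R2 = Re (mtrace (\<rho> * \<rho>)) - c"
  define a where "a t = Re (mtrace (\<rho> * P t)) - c" for t
  have fX0: "fip N X0 X0 = R2"
    using fip_shift[OF c\<rho> c\<rho> h\<rho> h\<rho> t\<rho> t\<rho> assms(1)] unfolding X0_def E_def c_def R2_def .
  have fXt: "fip N (Xt t) (Xt t) = R2" if t: "t \<in> S" for t
    using fip_shift[OF cP[OF t] cP[OF t] hP[OF t] hP[OF t] trP[OF t] trP[OF t] assms(1)] trPP[OF t]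
    unfolding Xt_def E_def c_def R2_def by simp
  have fX0t: "fip N X0 (Xt t) = a t" if t: "t \<in> S" for t
    using fip_shift[OF c\<rho> cP[OF t] h\<rho> hP[OF t] t\<rho> trP[OF t] assms(1)]
    unfolding X0_def Xt_def E_def c_def a_def .
  have fXtD: "fip N (Xt t) (D t) = 0" if t: "t \<in> S" for t
    using fip_shift_D[OF cP[OF t] cD[OF t] hD[OF t] trD[OF t], of c] trPD[OF t]
    unfolding Xt_def E_def by simp
  have fX0D: "fip N X0 (D t) = Re (mtrace (\<rho> * D t))" if t: "t \<in> S" for t
    using fip_shift_D[OF c\<rho> cD[OF t] hD[OF t] trD[OF t], of c]
    unfolding X0_def E_def by simp
  have fDD: "fip N (D t) (D t) = 2 * Re (mtrace (P t * P t * H t * H t - P t * H t * (P t * H t)))"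
    if t: "t \<in> S" for t
  proof -
    define K where "K = H t * P t - P t * H t"
    have cK: "K \<in> carrier_mat N N" using cP[OF t] cH[OF t] by (simp add: K_def minus_carrier_mat)
    have "D t * D t = (- \<i>) \<cdot>\<^sub>m (K * ((- \<i>) \<cdot>\<^sub>m K))"
      unfolding D_def K_def[symmetric] by (rule mult_smult_assoc_mat[OF cK smult_carrier_mat[OF cK]])
    also have "K * ((- \<i>) \<cdot>\<^sub>m K) = (- \<i>) \<cdot>\<^sub>m (K * K)" by (rule mult_smult_distrib[OF cK cK])
    finally have "mtrace (D t * D t) = (- \<i>) * ((- \<i>) * mtrace (K * K))"
      using mtrace_smult[OF smult_carrier_mat[OF mult_carrier_sq[OF cK cK]]] mtrace_smult[OF mult_carrier_sq[OF cK cK]] by simp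
    also have "\<dots> = - mtrace (K * K)" by simp
    also have "\<dots> = 2 * mtrace (P t * P t * H t * H t - P t * H t * (P t * H t))"
      unfolding K_def comm_sq[OF cP[OF t] cH[OF t]] by simp
    finally show ?thesis using fip_trace[OF cD[OF t] cD[OF t] hD[OF t]] by simp
  qed
  have R2pos: "R2 > 0"
  proof -
    have "R2 \<ge> 0" using fX0 fip_nonneg[of N X0] by simp
    moreover have "R2 \<noteq> 0"
    proof
      assume "R2 = 0"
      then have "X0 = 0\<^sub>m N N" using fip_zero[OF cX0] fX0 by simp
      have "\<rho> = E"
      proof (rule eq_matI)
        fix i j assume ij: "i < dim_row E" "j < dim_col E"
        have "(\<rho> - E) $$ (i,j) = 0\<^sub>m N N $$ (i,j)" using \<open>X0 = 0\<^sub>m N N\<close> unfolding X0_def by simp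
        then show "\<rho> $$ (i,j) = E $$ (i,j)" using ij c\<rho> cE by simp
      qed (use c\<rho> cE in auto)
      then show False using assms(5) by (simp add: E_def c_def)
    qed
    ultimately show ?thesis by simp
  qed
  define g where "g t = a t / R2" for t
  define g' where "g' t = Re (mtrace (\<rho> * D t)) / R2" for t
  define f where "f t = sqrt (2 * Re (mtrace (P t * P t * H t * H t - (P t * H t) * (P t * H t)))
            / Re (mtrace (P t * P t - (1 / (of_nat N)^2) \<cdot>\<^sub>m 1\<^sub>m N)))" for t
  have den: "Re (mtrace (P t * P t - (1 / (of_nat N)^2) \<cdot>\<^sub>m 1\<^sub>m N)) = R2" if t: "t \<in> S" for t
  proof -
    have c1: "P t * P t \<in> carrier_mat N N" "(1 / (of_nat N)^2) \<cdot>\<^sub>m 1\<^sub>m N \<in> carrier_mat N (N::nat)"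
      using cP[OF t] by auto
    have e: "(1 / (of_nat N)^2) * (of_nat N :: complex) = of_real (1 / real N)"
      using assms(1) by (simp add: power2_eq_square)
    show ?thesis
      using mtrace_minus[OF c1] mtrace_smult[OF one_carrier_mat, of "1 / (of_nat N)^2" N] mtrace_one[of N]
        trPP[OF t] e unfolding R2_def c_def
      by (metis Re_complex_of_real minus_complex.sel(1))
  qed
  have ff: "f t = sqrt (fip N (D t) (D t) / R2)" if t: "t \<in> S" for t
    unfolding f_def den[OF t] fDD[OF t] ..
  have mH: "mcont N S H" using assms(8) by (simp add: mcont_def S_def)
  have mP: "mcont N S P" by (rule mderiv_mcont[OF dP])
  have cHs: "\<forall>s\<in>S. H s \<in> carrier_mat N N" using cH by auto
  have mD: "mcont N S D"
  proof -
    have m1: "mcont N S (\<lambda>s. H s * P s - P s * H s)"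
      by (rule mcont_minus) (use cP cH mcont_mult[OF cHs cPs mH mP] mcont_mult[OF cPs cHs mP mH] in auto)
    have "mcont N S (\<lambda>s. (- \<i>) \<cdot>\<^sub>m (H s * P s - P s * H s))"
      by (rule mcont_smult[OF _ m1]) (use cP cH in \<open>auto simp: minus_carrier_mat\<close>)
    then show ?thesis unfolding D_def[abs_def] .
  qed
  have fc: "continuous_on S f"
  proof -
    have "continuous_on S (\<lambda>t. sqrt (fip N (D t) (D t) / R2))"
      using mcont_fip[OF mD] R2pos by (intro continuous_intros) auto
    then show ?thesis using ff by (auto intro: continuous_on_cong[THEN iffD1, rotated 2])
  qed
  have fnn: "\<forall>t\<in>S. 0 \<le> f t" using ff fip_nonneg R2pos by simp
  have gd: "\<forall>t\<in>S. (g has_real_derivative g' t) (at t within S)"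
  proof
    fix t assume t: "t \<in> S"
    have cr: "\<forall>s\<in>S. \<rho> \<in> carrier_mat N N" using c\<rho> by auto
    have d1: "mderiv N S (\<lambda>s. \<rho> * P s) (0\<^sub>m N N * P t + \<rho> * D t) t"
      by (rule mderiv_mult[OF cr cPs _ cD[OF t] t mderiv_const]) (use dP t in auto)
    have e: "0\<^sub>m N N * P t + \<rho> * D t = \<rho> * D t"
      using left_mult_zero_mat[OF cP[OF t], of N] left_add_zero_mat[OF mult_carrier_sq[OF c\<rho> cD[OF t]]] by simp
    have d2: "((\<lambda>s. mtrace (\<rho> * P s)) has_vector_derivative mtrace (\<rho> * D t)) (at t within S)"
      by (rule mderiv_trace[OF _ _ t d1[unfolded e]]) (use c\<rho> cP cD[OF t] in auto)
    have d3: "((\<lambda>s. Re (mtrace (\<rho> * P s))) has_real_derivative Re (mtrace (\<rho> * D t))) (at t within S)"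
      by (rule has_field_derivative_Re[OF d2])
    have "((\<lambda>s. (Re (mtrace (\<rho> * P s)) - c) / R2) has_real_derivative (Re (mtrace (\<rho> * D t)) - 0) / R2) (at t within S)"
      by (intro DERIV_cdivide DERIV_diff d3 DERIV_const)
    then show "(g has_real_derivative g' t) (at t within S)"
      unfolding g_def[abs_def] g'_def a_def by simp
  qed
  have gb: "\<forall>t\<in>S. \<bar>g t\<bar> \<le> 1"
  proof
    fix t assume t: "t \<in> S"
    have "(a t)\<^sup>2 \<le> R2\<^sup>2"
      using fip_CS[of N X0 "Xt t"] fX0 fXt[OF t] fX0t[OF t] by (simp add: power2_eq_square)
    then have "\<bar>a t\<bar> \<le> R2" using R2pos by (simp add: power2_le_iff_abs_le)
    then show "\<bar>g t\<bar> \<le> 1" using R2pos by (simp add: g_def abs_divide)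
  qed
  have g0: "g 0 = 1" using R2pos by (simp add: g_def a_def P0 R2_def)
  have bd: "\<forall>t\<in>S. \<bar>g' t\<bar> \<le> sqrt (1 - (g t)\<^sup>2) * f t"
  proof
    fix t assume t: "t \<in> S"
    have k: "\<bar>fip N X0 (D t)\<bar> \<le> sqrt (R2 - (a t)\<^sup>2 / R2) * sqrt (fip N (D t) (D t))"
      by (rule key_ineq[OF cX0 cXt fXtD[OF t] fX0 fXt[OF t] fX0t[OF t] R2pos])
    have "\<bar>g' t\<bar> = \<bar>fip N X0 (D t)\<bar> / R2" using R2pos fX0D[OF t] by (simp add: g'_def abs_divide)
    also have "\<dots> \<le> sqrt (R2 - (a t)\<^sup>2 / R2) * sqrt (fip N (D t) (D t)) / R2"
      using k R2pos by (simp add: divide_right_mono)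
    also have "\<dots> = sqrt (1 - (g t)\<^sup>2) * f t"
      unfolding sqrt_alg[OF R2pos] ff[OF t] g_def ..
    finally show "\<bar>g' t\<bar> \<le> sqrt (1 - (g t)\<^sup>2) * f t" .
  qed
  have main: "arccos (g T) \<le> integral {0..T} f"
    by (rule arc_bound[of T f g g']) (use assms(6) fc fnn gd gb g0 bd in \<open>auto simp: S_def\<close>)
  have th: "Theta N \<rho> \<sigma> = arccos (g T)"
    unfolding Theta_def g_def a_def R2_def c_def PT[symmetric] ..
  have Pf: "(\<lambda>t. U t * \<rho> * dagger (U t)) = P" by (simp add: P_def fun_eq_iff)
  have q: "QTheta N T H (\<lambda>t. U t * \<rho> * dagger (U t)) = (1 / T) * integral {0..T} f"
    unfolding Pf QTheta_def f_def ..
  have Inn: "integral {0..T} f \<ge> 0"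
    by (rule integral_nonneg[OF integrable_continuous_real]) (use fc fnn in \<open>auto simp: S_def\<close>)
  show ?thesis
  proof (cases "integral {0..T} f = 0")
    case True then show ?thesis using assms(6) by (simp add: q)
  next
    case False
    then have Ip: "integral {0..T} f > 0" using Inn by simp
    have "Theta N \<rho> \<sigma> / QTheta N T H (\<lambda>t. U t * \<rho> * dagger (U t)) = T * (arccos (g T) / integral {0..T} f)"
      unfolding q th using assms(6) Ip by (simp add: field_simps)
    also have "\<dots> \<le> T * 1"
      using main Ip assms(6) by (intro mult_left_mono) (auto simp: divide_le_eq_1)
    finally show ?thesis by simp
  qed
qed

end
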